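(* Let $S\subset\mathbb P^1$ be finite, let $(\alpha_1(p),\alpha_2(p),\alpha_3(p))_{p\in S}$ be real numbers with $\max_i\alpha_i(p)-\min_i\alpha_i(p)<1$ for each $p$ and $\sum_{i=1}^3\sum_{p\in S}\alpha_i(p)=0$, and let $(d_1,d_2,d_3)\in\mathbb Z^3$. For $i=1,2$ let $\ell_i=\#\{p\in S:\alpha_{i+1}(p)>\alpha_i(p)\}$. Then there exists a semistable strongly parabolic system of Hodge bundles $(\mathcal E,\theta)$ of type $(1,1,1)$ and parabolic degree $0$, with $\mathcal E=\mathcal L_1\oplus\mathcal L_2\oplus\mathcal L_3$, $\mathcal L_i$ of degree $d_i$ carrying weights $\alpha_i(p)$, and $\theta_1,\theta_2$ nonzero, if and only if $$\sum_{p\in S}(\alpha_2(p)+\alpha_3(p))\le d_1\le d_2-2+\ell_1\le d_3-4+\ell_1+\ell_2\le-\sum_{p\in S}\alpha_3(p)-4+\ell_1+\ell_2$$ and $d_1+d_2+d_3=0$.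
   Context: A strongly parabolic system of Hodge bundles of type $(1,1,1)$ over $\mathbb P^1$ with parabolic structure at $S$: line bundles $\mathcal L_1,\mathcal L_2,\mathcal L_3$ with weights $\alpha_i(p)$ at $p\in S$, $\mathcal E=\mathcal L_1\oplus\mathcal L_2\oplus\mathcal L_3$, and a Higgs field $\theta$ given by $\theta_1:\mathcal L_1\to\mathcal L_2\otimes\Omega^1(\log S)$, $\theta_2:\mathcal L_2\to\mathcal L_3\otimes\Omega^1(\log S)$, $\theta(\mathcal L_3)=0$, such that $\mathrm{res}_p\theta_i=0$ whenever $\alpha_{i+1}(p)\le\alpha_i(p)$ (the residue must send each weight part into the part of the next strictly larger weight). The parabolic degree of a sum $\mathcal F$ of some of the $\mathcal L_i$ is $\sum\big(d_i+\sum_{p}\alpha_i(p)\big)$ over the summands. $(\mathcal E,\theta)$ is semistable if every nonzero subbundle $\mathcal F=\bigoplus_{i\in A}\mathcal L_i$ ($A\subset\{1,2,3\}$) with $\theta(\mathcal F)\subset\mathcal F\otimes\Omega^1(\log S)$ satisfies $\mathrm{pardeg}\,\mathcal F/\mathrm{rank}\,\mathcal F\le\mathrm{pardeg}\,\mathcal E/3$. *)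

theory Defs
  imports Complex_Main
begin

(* Model of P^1 over C: complex option, None = infinity = [1:0], Some z = [z:1].
   A global section of O(n) on P^1 is a homogeneous polynomial of degree n in (x,y),
   f = sum_{k=0}^n c_k x^k y^(n-k), encoded by its coefficient function c
   (c k = 0 for k > n; for n < 0 only the zero section). *)

definition sec_O :: "int \<Rightarrow> (nat \<Rightarrow> complex) \<Rightarrow> bool" where
  "sec_O n c \<longleftrightarrow> (\<forall>k. int k > n \<longrightarrow> c k = 0)"

(* value of the section at a point, in the standard local trivialisation *)
definition sec_eval :: "int \<Rightarrow> (nat \<Rightarrow> complex) \<Rightarrow> complex option \<Rightarrow> complex" where
  "sec_eval n c p = (case p of None \<Rightarrow> c (nat n) | Some z \<Rightarrow> (\<Sum>k\<le>nat n. c k * z ^ k))"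

(* Higgs field component theta_i : L_i -> L_{i+1} (x) Omega^1(log S) is a section of
   L_i^* (x) L_{i+1} (x) Omega^1(log S) = O(d_{i+1} - d_i - 2 + |S|);
   its residue at p in S vanishes iff the section vanishes at p. *)
definition higgs_deg :: "complex option set \<Rightarrow> (nat \<Rightarrow> int) \<Rightarrow> nat \<Rightarrow> int" where
  "higgs_deg S d i = d (i+1) - d i - 2 + int (card S)"

definition strongly_parabolic_hodge ::
  "complex option set \<Rightarrow> (nat \<Rightarrow> complex option \<Rightarrow> real) \<Rightarrow> (nat \<Rightarrow> int)
    \<Rightarrow> (nat \<Rightarrow> nat \<Rightarrow> complex) \<Rightarrow> bool" where
  "strongly_parabolic_hodge S \<alpha> d \<theta> \<longleftrightarrow>
     (\<forall>i\<in>{1,2}. sec_O (higgs_deg S d i) (\<theta> i) \<and>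
        (\<forall>p\<in>S. \<alpha> (i+1) p \<le> \<alpha> i p \<longrightarrow> sec_eval (higgs_deg S d i) (\<theta> i) p = 0))"

definition pardeg ::
  "complex option set \<Rightarrow> (nat \<Rightarrow> complex option \<Rightarrow> real) \<Rightarrow> (nat \<Rightarrow> int) \<Rightarrow> nat set \<Rightarrow> real" where
  "pardeg S \<alpha> d A = (\<Sum>i\<in>A. (real_of_int (d i) + (\<Sum>p\<in>S. \<alpha> i p)))"

(* F = sum_{i in A} L_i is theta-invariant; theta(L_3) = 0 *)
definition theta_invariant :: "(nat \<Rightarrow> nat \<Rightarrow> complex) \<Rightarrow> nat set \<Rightarrow> bool" where
  "theta_invariant \<theta> A \<longleftrightarrow> (\<forall>i\<in>A. i \<in> {1,2} \<longrightarrow> \<theta> i = (\<lambda>_. 0) \<or> i + 1 \<in> A)"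

definition semistable ::
  "complex option set \<Rightarrow> (nat \<Rightarrow> complex option \<Rightarrow> real) \<Rightarrow> (nat \<Rightarrow> int)
    \<Rightarrow> (nat \<Rightarrow> nat \<Rightarrow> complex) \<Rightarrow> bool" where
  "semistable S \<alpha> d \<theta> \<longleftrightarrow>
     (\<forall>A. A \<subseteq> {1,2,3} \<longrightarrow> A \<noteq> {} \<longrightarrow> theta_invariant \<theta> A \<longrightarrow>
        pardeg S \<alpha> d A / real (card A) \<le> pardeg S \<alpha> d {1,2,3} / 3)"

definition ell :: "complex option set \<Rightarrow> (nat \<Rightarrow> complex option \<Rightarrow> real) \<Rightarrow> nat \<Rightarrow> nat" where
  "ell S \<alpha> i = card {p\<in>S. \<alpha> (i+1) p > \<alpha> i p}"

end

theory Submission imports Defs "HOL-Computational_Algebra.Polynomial" begin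

lemma card_Z_split:
  fixes Z :: "complex option set"
  assumes "finite Z"
  shows "card Z = card {z. Some z \<in> Z} + (if None \<in> Z then 1 else 0)"
proof -
  have fin: "finite {z. Some z \<in> Z}" using finite_vimageI[OF assms inj_Some] by (simp add: vimage_def)
  have e: "Z = Some ` {z. Some z \<in> Z} \<union> (Z \<inter> {None})"
  proof (intro equalityI subsetI)
    fix x assume "x \<in> Z" thus "x \<in> Some ` {z. Some z \<in> Z} \<union> (Z \<inter> {None})" by (cases x) auto
  qed auto
  have "card Z = card (Some ` {z. Some z \<in> Z}) + card (Z \<inter> {None})"
    by (subst e, rule card_Un_disjoint) (use fin in auto)
  also have "card (Z \<inter> {None}) = (if None \<in> Z then 1 else 0)" by auto
  also have "card (Some ` {z. Some z \<in> Z}) = card {z. Some z \<in> Z}" by (simp add: card_image)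
  finally show ?thesis .
qed

lemma sec_nec:
  fixes Z :: "complex option set"
  assumes "finite Z" "sec_O n c" "c \<noteq> (\<lambda>_. 0)" "\<forall>p\<in>Z. sec_eval n c p = 0"
  shows "int (card Z) \<le> n"
proof -
  have n0: "n \<ge> 0"
  proof (rule ccontr)
    assume "\<not> n \<ge> 0"
    have "\<forall>k. c k = 0"
    proof
      fix k :: nat have "int k > n" using \<open>\<not> n \<ge> 0\<close> by linarith
      thus "c k = 0" using assms(2) unfolding sec_O_def by blast
    qed
    thus False using assms(3) by auto
  qed
  define N where "N = nat n"
  have cz: "\<And>k. k > N \<Longrightarrow> c k = 0" using assms(2) n0 unfolding sec_O_def N_def by auto
  define q where "q = (\<Sum>k\<le>N. monom (c k) k)"
  have cq: "coeff q k = c k" for k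
    unfolding q_def coeff_sum using cz[of k] by (cases "k \<le> N") auto
  have q0: "q \<noteq> 0"
  proof
    assume "q = 0" hence "\<forall>k. c k = 0" using cq by (metis coeff_0)
    thus False using assms(3) by auto
  qed
  have pq: "poly q z = (\<Sum>k\<le>N. c k * z ^ k)" for z
    unfolding q_def poly_sum poly_monom by simp
  have dq: "degree q \<le> N" using cz cq by (intro degree_le) auto
  let ?ZS = "{z. Some z \<in> Z}"
  have sub: "?ZS \<subseteq> {x. poly q x = 0}"
    using assms(4) pq unfolding sec_eval_def N_def by auto
  have "card ?ZS \<le> card {x. poly q x = 0}"
    by (rule card_mono[OF poly_roots_finite[OF q0] sub])
  also have "\<dots> \<le> degree q" by (rule card_poly_roots_bound[OF q0])
  finally have c1: "card ?ZS \<le> degree q" .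
  have "card Z \<le> N"
  proof (cases "None \<in> Z")
    case True
    hence "c N = 0" using assms(4) unfolding sec_eval_def N_def by auto
    hence "degree q \<noteq> N" using cq q0 by (metis leading_coeff_0_iff)
    hence "degree q < N" using dq by simp
    thus ?thesis using c1 card_Z_split[OF assms(1)] True by simp
  next
    case False
    thus ?thesis using c1 dq card_Z_split[OF assms(1)] by simp
  qed
  thus ?thesis using n0 N_def by simp
qed

lemma sec_suf:
  fixes Z :: "complex option set"
  assumes "finite Z" "int (card Z) \<le> n"
  shows "\<exists>c. sec_O n c \<and> c \<noteq> (\<lambda>_. 0) \<and> (\<forall>p\<in>Z. sec_eval n c p = 0)"
proof -
  have n0: "n \<ge> 0" using assms(2) by linarith
  define N where "N = nat n"
  let ?ZS = "{z. Some z \<in> Z}"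
  have fin: "finite ?ZS" using finite_vimageI[OF assms(1) inj_Some] by (simp add: vimage_def)
  define q :: "complex poly" where "q = (\<Prod>z\<in>?ZS. [:-z, 1:])"
  have dq: "degree q = card ?ZS"
    unfolding q_def by (subst degree_prod_sum_eq) auto
  have q0: "q \<noteq> 0" unfolding q_def using fin by (simp add: prod_zero_iff)
  have roots: "poly q z = 0" if "z \<in> ?ZS" for z
    unfolding q_def poly_prod using fin that by (auto intro: prod_zero)
  have cardN: "card Z \<le> N" using assms(2) N_def by simp
  have dqN: "degree q \<le> N" using dq cardN card_Z_split[OF assms(1)] by simp
  have ev: "(\<Sum>k\<le>N. coeff q k * z ^ k) = poly q z" for z
  proof -
    have "(\<Sum>k\<le>N. coeff q k * z ^ k) = (\<Sum>k\<le>degree q. coeff q k * z ^ k)"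
      by (rule sum.mono_neutral_right) (use dqN in \<open>auto simp: coeff_eq_0\<close>)
    thus ?thesis by (simp add: poly_altdef)
  qed
  show ?thesis
  proof (intro exI conjI ballI)
    have dqn: "int (degree q) \<le> n" using dqN N_def n0 by simp
    show "sec_O n (coeff q)" unfolding sec_O_def
    proof (intro allI impI coeff_eq_0)
      fix k assume "n < int k" thus "degree q < k" using dqn by linarith
    qed
    show "coeff q \<noteq> (\<lambda>_. 0)"
    proof
      assume "coeff q = (\<lambda>_. 0)"
      hence "q = 0" by (intro poly_eqI) simp
      thus False using q0 by simp
    qed
    fix p assume p: "p \<in> Z"
    show "sec_eval n (coeff q) p = 0"
    proof (cases p)
      case None
      hence "degree q < N" using dq cardN card_Z_split[OF assms(1)] p by simp
      thus ?thesis using None unfolding sec_eval_def N_def by (simp add: coeff_eq_0)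
    next
      case (Some z)
      thus ?thesis using ev roots p unfolding sec_eval_def N_def by simp
    qed
  qed
qed

lemma sec_iff:
  fixes Z :: "complex option set"
  assumes "finite Z"
  shows "(\<exists>c. sec_O n c \<and> c \<noteq> (\<lambda>_. 0) \<and> (\<forall>p\<in>Z. sec_eval n c p = 0)) \<longleftrightarrow> int (card Z) \<le> n"
  using sec_nec[OF assms] sec_suf[OF assms] by blast


lemma card_Z:
  assumes "finite S"
  shows "int (card {p\<in>S. \<alpha> (i+1) p \<le> \<alpha> i p}) = int (card S) - int (ell S \<alpha> i)"
proof -
  have e: "{p\<in>S. \<alpha> (i+1) p \<le> \<alpha> i p} = S - {p\<in>S. \<alpha> (i+1) p > \<alpha> i p}" by auto
  have "card {p\<in>S. \<alpha> (i+1) p \<le> \<alpha> i p} = card S - card {p\<in>S. \<alpha> (i+1) p > \<alpha> i p}"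
    unfolding e by (rule card_Diff_subset) (use assms in auto)
  moreover have "card {p\<in>S. \<alpha> (i+1) p > \<alpha> i p} \<le> card S"
    by (rule card_mono) (use assms in auto)
  ultimately show ?thesis unfolding ell_def by simp
qed

lemma theta_iff:
  assumes "finite S"
  shows "(\<exists>c. sec_O (higgs_deg S d i) c \<and> c \<noteq> (\<lambda>_. 0) \<and>
            (\<forall>p\<in>S. \<alpha> (i+1) p \<le> \<alpha> i p \<longrightarrow> sec_eval (higgs_deg S d i) c p = 0))
         \<longleftrightarrow> d i \<le> d (i+1) - 2 + int (ell S \<alpha> i)"
proof -
  have f: "finite {p\<in>S. \<alpha> (i+1) p \<le> \<alpha> i p}" using assms by simp
  have "(\<exists>c. sec_O (higgs_deg S d i) c \<and> c \<noteq> (\<lambda>_. 0) \<and>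
            (\<forall>p\<in>S. \<alpha> (i+1) p \<le> \<alpha> i p \<longrightarrow> sec_eval (higgs_deg S d i) c p = 0))
     \<longleftrightarrow> (\<exists>c. sec_O (higgs_deg S d i) c \<and> c \<noteq> (\<lambda>_. 0) \<and>
            (\<forall>p\<in>{p\<in>S. \<alpha> (i+1) p \<le> \<alpha> i p}. sec_eval (higgs_deg S d i) c p = 0))" by auto
  also have "\<dots> \<longleftrightarrow> int (card {p\<in>S. \<alpha> (i+1) p \<le> \<alpha> i p}) \<le> higgs_deg S d i"
    by (rule sec_iff[OF f])
  also have "\<dots> \<longleftrightarrow> d i \<le> d (i+1) - 2 + int (ell S \<alpha> i)"
    unfolding card_Z[OF assms] higgs_deg_def by linarith
  finally show ?thesis .
qed

lemma semi_iff:
  assumes "\<theta> 1 \<noteq> (\<lambda>_. 0)" "\<theta> 2 \<noteq> (\<lambda>_. 0)"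
  shows "semistable S \<alpha> d \<theta> \<longleftrightarrow>
    (pardeg S \<alpha> d {3} \<le> pardeg S \<alpha> d {1,2,3} / 3 \<and>
     pardeg S \<alpha> d {2,3} / 2 \<le> pardeg S \<alpha> d {1,2,3} / 3)"
proof
  assume s: "semistable S \<alpha> d \<theta>"
  have i3: "theta_invariant \<theta> {3}" "theta_invariant \<theta> {2,3}" unfolding theta_invariant_def by auto
  show "pardeg S \<alpha> d {3} \<le> pardeg S \<alpha> d {1,2,3} / 3 \<and>
     pardeg S \<alpha> d {2,3} / 2 \<le> pardeg S \<alpha> d {1,2,3} / 3"
  proof
    have "pardeg S \<alpha> d {3} / real (card {3::nat}) \<le> pardeg S \<alpha> d {1,2,3} / 3"
      using s i3(1) unfolding semistable_def by blast
    thus "pardeg S \<alpha> d {3} \<le> pardeg S \<alpha> d {1,2,3} / 3" by simp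
    have "pardeg S \<alpha> d {2,3} / real (card {2,3::nat}) \<le> pardeg S \<alpha> d {1,2,3} / 3"
      using s i3(2) unfolding semistable_def by blast
    thus "pardeg S \<alpha> d {2,3} / 2 \<le> pardeg S \<alpha> d {1,2,3} / 3" by simp
  qed
next
  assume h: "pardeg S \<alpha> d {3} \<le> pardeg S \<alpha> d {1,2,3} / 3 \<and>
     pardeg S \<alpha> d {2,3} / 2 \<le> pardeg S \<alpha> d {1,2,3} / 3"
  show "semistable S \<alpha> d \<theta>" unfolding semistable_def
  proof (intro allI impI)
    fix A :: "nat set" assume A: "A \<subseteq> {1,2,3}" "A \<noteq> {}" "theta_invariant \<theta> A"
    have b: "\<theta> i = (\<lambda>_. 0) \<or> i + 1 \<in> A" if "i \<in> A" "i \<in> {1,2}" for i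
      using A(3) that unfolding theta_invariant_def by blast
    have a1: "1 \<in> A \<Longrightarrow> 2 \<in> A" using b[of 1] assms(1) by (simp add: numeral_2_eq_2)
    have a2: "2 \<in> A \<Longrightarrow> 3 \<in> A" using b[of 2] assms(2) by simp
    have "A = {3} \<or> A = {2,3} \<or> A = {1,2,3}"
    proof (cases "1 \<in> A")
      case True thus ?thesis using a1 a2 A(1) by auto
    next
      case False
      show ?thesis
      proof (cases "2 \<in> A")
        case True thus ?thesis using False a2 A(1) by auto
      next
        case F2: False
        hence "A \<subseteq> {3}" using False A(1) by auto
        thus ?thesis using A(2) by auto
      qed
    qed
    thus "pardeg S \<alpha> d A / real (card A) \<le> pardeg S \<alpha> d {1,2,3} / 3"
      using h by auto
  qed
qed

theorem proposition9p1:
  fixes S :: "complex option set"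
    and \<alpha> :: "nat \<Rightarrow> complex option \<Rightarrow> real"
    and d :: "nat \<Rightarrow> int"
  assumes "finite S"
    and "\<forall>p\<in>S. Max ((\<lambda>i. \<alpha> i p) ` {1,2,3}) - Min ((\<lambda>i. \<alpha> i p) ` {1,2,3}) < 1"
    and "(\<Sum>i\<in>{1,2,3}. \<Sum>p\<in>S. \<alpha> i p) = 0"
  shows "(\<exists>\<theta>. strongly_parabolic_hodge S \<alpha> d \<theta> \<and> semistable S \<alpha> d \<theta>
              \<and> pardeg S \<alpha> d {1,2,3} = 0 \<and> \<theta> 1 \<noteq> (\<lambda>_. 0) \<and> \<theta> 2 \<noteq> (\<lambda>_. 0))
    \<longleftrightarrow>
     ((\<Sum>p\<in>S. \<alpha> 2 p + \<alpha> 3 p) \<le> real_of_int (d 1)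
      \<and> real_of_int (d 1) \<le> real_of_int (d 2) - 2 + real (ell S \<alpha> 1)
      \<and> real_of_int (d 2) - 2 + real (ell S \<alpha> 1) \<le> real_of_int (d 3) - 4 + real (ell S \<alpha> 1) + real (ell S \<alpha> 2)
      \<and> real_of_int (d 3) - 4 + real (ell S \<alpha> 1) + real (ell S \<alpha> 2)
          \<le> - (\<Sum>p\<in>S. \<alpha> 3 p) - 4 + real (ell S \<alpha> 1) + real (ell S \<alpha> 2)
      \<and> d 1 + d 2 + d 3 = 0)"
  proof -
  let ?P = "pardeg S \<alpha> d {1,2,3}"
  let ?a1 = "\<Sum>p\<in>S. \<alpha> 1 p" and ?a2 = "\<Sum>p\<in>S. \<alpha> 2 p" and ?a3 = "\<Sum>p\<in>S. \<alpha> 3 p"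
  have s0: "?a1 + ?a2 + ?a3 = 0" using assms(3) by simp
  have P: "?P = real_of_int (d 1) + real_of_int (d 2) + real_of_int (d 3)"
    using s0 unfolding pardeg_def by simp
  have P3: "pardeg S \<alpha> d {3} = real_of_int (d 3) + ?a3" unfolding pardeg_def by simp
  have P23: "pardeg S \<alpha> d {2,3} = real_of_int (d 2) + ?a2 + (real_of_int (d 3) + ?a3)"
    unfolding pardeg_def by simp
  have s23: "(\<Sum>p\<in>S. \<alpha> 2 p + \<alpha> 3 p) = ?a2 + ?a3" by (rule sum.distrib)
  have T1: "(\<exists>c. sec_O (higgs_deg S d 1) c \<and> c \<noteq> (\<lambda>_. 0) \<and>
            (\<forall>p\<in>S. \<alpha> (1+1) p \<le> \<alpha> 1 p \<longrightarrow> sec_eval (higgs_deg S d 1) c p = 0))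
         \<longleftrightarrow> real_of_int (d 1) \<le> real_of_int (d 2) - 2 + real (ell S \<alpha> 1)"
  proof -
    have e: "real_of_int (d 2) - 2 + real (ell S \<alpha> 1) = real_of_int (d (1+1) - 2 + int (ell S \<alpha> 1))" by (simp add: numeral_2_eq_2)
    show ?thesis unfolding theta_iff[OF assms(1)] e of_int_le_iff ..
  qed
  have T2: "(\<exists>c. sec_O (higgs_deg S d 2) c \<and> c \<noteq> (\<lambda>_. 0) \<and>
            (\<forall>p\<in>S. \<alpha> (2+1) p \<le> \<alpha> 2 p \<longrightarrow> sec_eval (higgs_deg S d 2) c p = 0))
         \<longleftrightarrow> real_of_int (d 2) \<le> real_of_int (d 3) - 2 + real (ell S \<alpha> 2)"
  proof -
    have e: "real_of_int (d 3) - 2 + real (ell S \<alpha> 2) = real_of_int (d (2+1) - 2 + int (ell S \<alpha> 2))" by (simp add: numeral_3_eq_3)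
    show ?thesis unfolding theta_iff[OF assms(1)] e of_int_le_iff ..
  qed
  show ?thesis
  proof
    assume "\<exists>\<theta>. strongly_parabolic_hodge S \<alpha> d \<theta> \<and> semistable S \<alpha> d \<theta>
              \<and> pardeg S \<alpha> d {1,2,3} = 0 \<and> \<theta> 1 \<noteq> (\<lambda>_. 0) \<and> \<theta> 2 \<noteq> (\<lambda>_. 0)"
    then obtain \<theta> where h: "strongly_parabolic_hodge S \<alpha> d \<theta>" "semistable S \<alpha> d \<theta>"
      "?P = 0" "\<theta> 1 \<noteq> (\<lambda>_. 0)" "\<theta> 2 \<noteq> (\<lambda>_. 0)" by blast
    have h1: "sec_O (higgs_deg S d 1) (\<theta> 1) \<and> (\<forall>p\<in>S. \<alpha> (1+1) p \<le> \<alpha> 1 p \<longrightarrow> sec_eval (higgs_deg S d 1) (\<theta> 1) p = 0)"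
      using h(1) unfolding strongly_parabolic_hodge_def by blast
    have h2: "sec_O (higgs_deg S d 2) (\<theta> 2) \<and> (\<forall>p\<in>S. \<alpha> (2+1) p \<le> \<alpha> 2 p \<longrightarrow> sec_eval (higgs_deg S d 2) (\<theta> 2) p = 0)"
      using h(1) unfolding strongly_parabolic_hodge_def by blast
    have i1: "real_of_int (d 1) \<le> real_of_int (d 2) - 2 + real (ell S \<alpha> 1)"
      using T1 h1 h(4) by blast
    have i2: "real_of_int (d 2) \<le> real_of_int (d 3) - 2 + real (ell S \<alpha> 2)"
      using T2 h2 h(5) by blast
    have ss: "pardeg S \<alpha> d {3} \<le> ?P / 3 \<and> pardeg S \<alpha> d {2,3} / 2 \<le> ?P / 3"
      using semi_iff[OF h(4) h(5)] h(2) by blast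
    have dsum: "d 1 + d 2 + d 3 = 0"
    proof -
      have "real_of_int (d 1 + d 2 + d 3) = 0" using P h(3) by simp
      thus ?thesis by linarith
    qed
    show "(\<Sum>p\<in>S. \<alpha> 2 p + \<alpha> 3 p) \<le> real_of_int (d 1)
      \<and> real_of_int (d 1) \<le> real_of_int (d 2) - 2 + real (ell S \<alpha> 1)
      \<and> real_of_int (d 2) - 2 + real (ell S \<alpha> 1) \<le> real_of_int (d 3) - 4 + real (ell S \<alpha> 1) + real (ell S \<alpha> 2)
      \<and> real_of_int (d 3) - 4 + real (ell S \<alpha> 1) + real (ell S \<alpha> 2)
          \<le> - (\<Sum>p\<in>S. \<alpha> 3 p) - 4 + real (ell S \<alpha> 1) + real (ell S \<alpha> 2)
      \<and> d 1 + d 2 + d 3 = 0"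
    proof -
      have f1: "real_of_int (d 3) + ?a3 \<le> 0" using ss h(3) P3 by simp
      have f2: "real_of_int (d 2) + ?a2 + (real_of_int (d 3) + ?a3) \<le> 0" using ss h(3) P23 by simp
      have dr: "real_of_int (d 1) + real_of_int (d 2) + real_of_int (d 3) = 0" using P h(3) by simp
      show ?thesis by (intro conjI; use i1 i2 f1 f2 s23 dr dsum in linarith)
    qed
  next
    assume c: "(\<Sum>p\<in>S. \<alpha> 2 p + \<alpha> 3 p) \<le> real_of_int (d 1)
      \<and> real_of_int (d 1) \<le> real_of_int (d 2) - 2 + real (ell S \<alpha> 1)
      \<and> real_of_int (d 2) - 2 + real (ell S \<alpha> 1) \<le> real_of_int (d 3) - 4 + real (ell S \<alpha> 1) + real (ell S \<alpha> 2)
      \<and> real_of_int (d 3) - 4 + real (ell S \<alpha> 1) + real (ell S \<alpha> 2)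
          \<le> - (\<Sum>p\<in>S. \<alpha> 3 p) - 4 + real (ell S \<alpha> 1) + real (ell S \<alpha> 2)
      \<and> d 1 + d 2 + d 3 = 0"
    have dr: "real_of_int (d 1) + real_of_int (d 2) + real_of_int (d 3) = 0"
    proof -
      have "real_of_int (d 1 + d 2 + d 3) = 0" using c by simp
      thus ?thesis by simp
    qed
    obtain c1 where c1: "sec_O (higgs_deg S d 1) c1" "c1 \<noteq> (\<lambda>_. 0)"
      "\<forall>p\<in>S. \<alpha> (1+1) p \<le> \<alpha> 1 p \<longrightarrow> sec_eval (higgs_deg S d 1) c1 p = 0"
      using T1 c by blast
    obtain c2 where c2: "sec_O (higgs_deg S d 2) c2" "c2 \<noteq> (\<lambda>_. 0)"
      "\<forall>p\<in>S. \<alpha> (2+1) p \<le> \<alpha> 2 p \<longrightarrow> sec_eval (higgs_deg S d 2) c2 p = 0"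
    proof -
      have "real_of_int (d 2) \<le> real_of_int (d 3) - 2 + real (ell S \<alpha> 2)" using c by linarith
      thus ?thesis using T2 that by blast
    qed
    define \<theta> where "\<theta> = (\<lambda>i::nat. if i = 1 then c1 else c2)"
    have t1: "\<theta> 1 = c1" and t2: "\<theta> 2 = c2" unfolding \<theta>_def by auto
    have sph: "strongly_parabolic_hodge S \<alpha> d \<theta>"
      unfolding strongly_parabolic_hodge_def using c1 c2 t1 t2 by auto
    have PP: "?P = 0" using P dr by simp
    have ss: "semistable S \<alpha> d \<theta>"
      unfolding semi_iff[of \<theta>, OF c1(2)[folded t1] c2(2)[folded t2]]
    proof
      show "pardeg S \<alpha> d {3} \<le> ?P / 3" unfolding PP P3 using c by linarith
      have "pardeg S \<alpha> d {2,3} \<le> 0" unfolding P23 using c dr s23 by linarith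
      thus "pardeg S \<alpha> d {2,3} / 2 \<le> ?P / 3" unfolding PP by simp
    qed
    show "\<exists>\<theta>. strongly_parabolic_hodge S \<alpha> d \<theta> \<and> semistable S \<alpha> d \<theta>
              \<and> pardeg S \<alpha> d {1,2,3} = 0 \<and> \<theta> 1 \<noteq> (\<lambda>_. 0) \<and> \<theta> 2 \<noteq> (\<lambda>_. 0)"
      using sph ss PP c1(2) c2(2) t1 t2 by auto
  qed
qed

end
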